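(* Let $P\subseteq\mathbb{R}^n$ be a permutation-invariant polytope, $x'\in P$, and $\pi$ a permutation of $\{1,\dots,n\}$ with $x'_{\pi(i)}\ge x'_{\pi(i+1)}$ for all $i=1,\dots,n-1$. Then there exists $u'\in P$ with $u'\ge_m x'$ and $u'_\Delta\ne x'_\Delta$ if and only if there does not exist $a\in\mathbb{R}^n$ with $a_{\pi(i)}>a_{\pi(i+1)}$ for all $i=1,\dots,n-1$ such that the inequality $\sum_{i=1}^n a_i(x_i-x'_i)\le0$ holds for all $x\in P$.
   Context: $P$ is permutation-invariant if $x\in P$ implies $Qx\in P$ for every permutation matrix $Q$. $x_{[i]}$ is the $i$-th largest entry; $x\ge_m y$ means $\sum_{i=1}^j x_{[i]}\ge\sum_{i=1}^j y_{[i]}$ for $j<n$ with equality for $j=n$. $x_\Delta=(x_{[1]},\dots,x_{[n]})$. *)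

theory Defs
  imports "HOL-Analysis.Analysis" "HOL-Library.Multiset"
begin

text \<open>Vectors in R^n are modelled as real^'n, with n = CARD('n).\<close>

definition perm_invariant :: "(real^'n) set \<Rightarrow> bool" where
  "perm_invariant P \<longleftrightarrow>
     (\<forall>x\<in>P. \<forall>\<sigma>. \<sigma> permutes (UNIV :: 'n set) \<longrightarrow> (\<chi> i. x $ \<sigma> i) \<in> P)"

text \<open>x_Delta: the entries of x sorted in non-increasing order; its (j+1)-th
  element is x_[j+1] (0-based list indexing).\<close>
definition decr_sort :: "real^'n \<Rightarrow> real list" where
  "decr_sort x = rev (sorted_list_of_multiset (image_mset (\<lambda>i. x $ i) (mset_set (UNIV :: 'n set))))"

definition majorizes :: "real^'n \<Rightarrow> real^'n \<Rightarrow> bool" where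
  "majorizes x y \<longleftrightarrow>
     (\<forall>j. 1 \<le> j \<and> j < CARD('n) \<longrightarrow> sum_list (take j (decr_sort x)) \<ge> sum_list (take j (decr_sort y)))
     \<and> sum_list (decr_sort x) = sum_list (decr_sort y)"

end

theory Submission imports Defs "HOL-Combinatorics.Permutations" begin

lemma sum_take_nth: "j \<le> length xs \<Longrightarrow> sum_list (take j xs) = (\<Sum>i<j. xs ! i)"
  by (simp add: sum_list_sum_nth atLeast0LessThan min_absorb1)

lemma top_sum:
  fixes L S :: "real list"
  assumes ms: "mset L = mset S" and so: "sorted_wrt (\<ge>) S" and j: "j \<le> length L"
  shows "sum_list (take j L) \<le> sum_list (take j S)"
proof (cases "j = 0")
  case True then show ?thesis by simp
next
  case False
  have len: "length S = length L" using ms by (metis mset_eq_length)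
  define t where "t = S ! (j - 1)"
  define g where "g = (\<lambda>y::real. max (y - t) 0)"
  have "sum_list (take j L) = (\<Sum>i<j. L ! i)" using j by (rule sum_take_nth)
  also have "\<dots> \<le> (\<Sum>i<j. g (L ! i) + t)"
    by (intro sum_mono) (auto simp: g_def)
  also have "\<dots> = (\<Sum>i<j. g (L ! i)) + j * t" by (simp add: sum.distrib)
  also have "(\<Sum>i<j. g (L ! i)) \<le> (\<Sum>i<length L. g (L ! i))"
    using j by (intro sum_mono2) (auto simp: g_def)
  also have "(\<Sum>i<length L. g (L ! i)) = sum_list (map g L)"
    by (simp add: sum_list_sum_nth atLeast0LessThan)
  also have "sum_list (map g L) = sum_list (map g S)"
    by (metis ms mset_map sum_mset_sum_list)
  also have "sum_list (map g S) = (\<Sum>i<length S. g (S ! i))"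
    by (simp add: sum_list_sum_nth atLeast0LessThan)
  also have "\<dots> = (\<Sum>i<j. g (S ! i)) + (\<Sum>i\<in>{j..<length S}. g (S ! i))"
    using j len by (metis add.commute atLeast0LessThan sum.atLeastLessThan_concat zero_le)
  also have "(\<Sum>i\<in>{j..<length S}. g (S ! i)) = 0"
  proof (intro sum.neutral ballI)
    fix i assume "i \<in> {j..<length S}"
    then have "S ! i \<le> t" using so False unfolding t_def sorted_wrt_iff_nth_less by auto
    then show "g (S ! i) = 0" by (simp add: g_def)
  qed
  also have "(\<Sum>i<j. g (S ! i)) = (\<Sum>i<j. S ! i - t)"
  proof (intro sum.cong refl)
    fix i assume "i \<in> {..<j}"
    then have "S ! i \<ge> t" using so False j len unfolding t_def sorted_wrt_iff_nth_less
      by (cases "i = j - 1") auto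
    then show "g (S ! i) = S ! i - t" by (simp add: g_def)
  qed
  also have "(\<Sum>i<j. S ! i - t) + 0 + j * t = (\<Sum>i<j. S ! i)"
    by (simp add: sum_subtractf)
  also have "\<dots> = sum_list (take j S)" using j len by (simp add: sum_take_nth)
  finally show ?thesis by simp
qed


lemma decr_sort_eq:
  fixes x :: "real^'n" and \<pi> :: "nat \<Rightarrow> 'n"
  assumes b: "bij_betw \<pi> {..<CARD('n)} UNIV"
  shows "decr_sort x = rev (sort (map (\<lambda>i. x $ \<pi> i) [0..<CARD('n)]))"
proof -
  have inj: "inj_on \<pi> {..<CARD('n)}" and im: "\<pi> ` {..<CARD('n)} = UNIV"
    using b by (auto simp: bij_betw_def)
  have "mset (map (\<lambda>i. x $ \<pi> i) [0..<CARD('n)]) = image_mset (\<lambda>i. x $ i) (image_mset \<pi> (mset_set {..<CARD('n)}))"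
    by (simp add: atLeast0LessThan multiset.map_comp o_def)
  also have "\<dots> = image_mset (\<lambda>i. x $ i) (mset_set (UNIV :: 'n set))"
    using image_mset_mset_set[OF inj] im by simp
  finally show ?thesis unfolding decr_sort_def
    by (metis sorted_list_of_multiset_mset)
qed

lemma decr_sort_props:
  fixes x :: "real^'n" and \<pi> :: "nat \<Rightarrow> 'n"
  assumes b: "bij_betw \<pi> {..<CARD('n)} UNIV"
  shows "mset (decr_sort x) = mset (map (\<lambda>i. x $ \<pi> i) [0..<CARD('n)])"
    "sorted_wrt (\<ge>) (decr_sort x)" "length (decr_sort x) = CARD('n)"
    "sum_list (decr_sort x) = sum_list (map (\<lambda>i. x $ \<pi> i) [0..<CARD('n)])"
  using decr_sort_eq[OF b, of x]
  by (auto simp: sorted_wrt_rev mset_rev simp flip: sum_mset_sum_list)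

definition Wv :: "(nat \<Rightarrow> 'n) \<Rightarrow> nat \<Rightarrow> real^'n" where
  "Wv \<pi> j = (\<chi> k. if k \<in> \<pi> ` {..<j} then 1 else 0)"

lemma Wv_inner:
  fixes x :: "real^'n" and \<pi> :: "nat \<Rightarrow> 'n"
  assumes b: "bij_betw \<pi> {..<CARD('n)} UNIV" and j: "j \<le> CARD('n)"
  shows "Wv \<pi> j \<bullet> x = sum_list (take j (map (\<lambda>i. x $ \<pi> i) [0..<CARD('n)]))"
proof -
  have inj: "inj_on \<pi> {..<j}"
    using b j by (meson bij_betw_def inj_on_subset lessThan_subset_iff)
  have "Wv \<pi> j \<bullet> x = (\<Sum>k\<in>UNIV. (if k \<in> \<pi> ` {..<j} then 1 else 0) * x $ k)"
    by (simp add: Wv_def inner_vec_def)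
  also have "\<dots> = (\<Sum>k\<in>\<pi> ` {..<j}. x $ k)"
    by (simp add: if_distrib[of "\<lambda>c. c * _"] sum.inter_restrict[symmetric] cong: if_cong)
  also have "\<dots> = (\<Sum>i<j. x $ \<pi> i)" using sum.reindex[OF inj] by simp
  also have "\<dots> = sum_list (take j (map (\<lambda>i. x $ \<pi> i) [0..<CARD('n)]))"
    using j by (simp add: sum_take_nth)
  finally show ?thesis .
qed


lemma abel_sum:
  fixes b d :: "nat \<Rightarrow> real"
  shows "(\<Sum>i<Suc k. b i * d i) = b k * (\<Sum>i<Suc k. d i) + (\<Sum>i<k. (b i - b (Suc i)) * (\<Sum>l<Suc i. d l))"
  by (induction k) (simp_all add: algebra_simps)

lemma sorted_x':
  fixes x' :: "real^'n" and \<pi> :: "nat \<Rightarrow> 'n"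
  assumes b: "bij_betw \<pi> {..<CARD('n)} UNIV"
    and s: "\<forall>i. Suc i < CARD('n) \<longrightarrow> x' $ \<pi> i \<ge> x' $ \<pi> (Suc i)"
  shows "decr_sort x' = map (\<lambda>i. x' $ \<pi> i) [0..<CARD('n)]"
proof -
  let ?L = "map (\<lambda>i. x' $ \<pi> i) [0..<CARD('n)]"
  have "sorted_wrt (\<ge>) ?L"
    using s by (subst sorted_wrt_iff_nth_Suc_transp) (auto simp: transp_def)
  then have "sorted (rev ?L)" by (simp add: sorted_wrt_rev)
  then have "sort ?L = rev ?L" by (intro properties_for_sort) simp
  then show ?thesis using decr_sort_eq[OF b] by simp
qed

lemma dir1:
  fixes P :: "(real^'n) set" and x' u' a :: "real^'n" and \<pi> :: "nat \<Rightarrow> 'n"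
  assumes b: "bij_betw \<pi> {..<CARD('n)} UNIV"
    and s: "\<forall>i. Suc i < CARD('n) \<longrightarrow> x' $ \<pi> i \<ge> x' $ \<pi> (Suc i)"
    and pinv: "perm_invariant P" and uP: "u' \<in> P" and maj: "majorizes u' x'"
    and ne: "decr_sort u' \<noteq> decr_sort x'"
    and a1: "\<forall>i. Suc i < CARD('n) \<longrightarrow> a $ \<pi> i > a $ \<pi> (Suc i)"
    and a2: "\<forall>x\<in>P. (\<Sum>i\<in>UNIV. a $ i * (x $ i - x' $ i)) \<le> 0"
  shows False
proof -
  define n where "n = CARD('n)"
  define S where "S = decr_sort u'"
  define T where "T = decr_sort x'"
  define Lu where "Lu = map (\<lambda>i. u' $ \<pi> i) [0..<n]"
  have T: "T = map (\<lambda>i. x' $ \<pi> i) [0..<n]" unfolding T_def n_def by (rule sorted_x'[OF b s])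
  have mS: "mset S = mset Lu" and lS: "length S = n"
    using decr_sort_props[OF b, of u'] by (auto simp: S_def Lu_def n_def)
  obtain p where p: "p permutes {..<n}" "permute_list p Lu = S"
    using mset_eq_permutation[OF mS] by (auto simp: Lu_def)
  have pin: "p i < n" if "i < n" for i using permutes_in_image[OF p(1)] that by simp
  have Snth: "S ! i = u' $ \<pi> (p i)" if "i < n" for i
    using p that permute_list_nth[of p Lu i] pin[OF that] by (auto simp: Lu_def)
  define q where "q = inv_into {..<n} \<pi>"
  define \<sigma> where "\<sigma> = \<pi> \<circ> p \<circ> q"
  have bq: "bij_betw q UNIV {..<n}" using b unfolding q_def n_def by (rule bij_betw_inv_into)
  have bs: "bij_betw \<sigma> UNIV UNIV" unfolding \<sigma>_def
    using bij_betw_trans[OF bij_betw_trans[OF bq permutes_imp_bij[OF p(1)]] b[folded n_def]] by (simp add: o_assoc)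
  have sp: "\<sigma> permutes UNIV" by (rule bij_imp_permutes[OF bs]) simp
  define u where "u = (\<chi> k. u' $ \<sigma> k)"
  have uP2: "u \<in> P" using pinv uP sp unfolding perm_invariant_def u_def by blast
  have qpi: "q (\<pi> i) = i" if "i < n" for i
    using b that unfolding q_def n_def by (meson bij_betw_imp_inj_on inv_into_f_f lessThan_iff)
  have unth: "u $ \<pi> i = S ! i" if "i < n" for i
    using that by (simp add: u_def \<sigma>_def qpi Snth)
  define bb where "bb i = a $ \<pi> i" for i
  define d where "d i = S ! i - T ! i" for i
  have "(\<Sum>i\<in>UNIV. a $ i * (u $ i - x' $ i)) = (\<Sum>i<n. a $ \<pi> i * (u $ \<pi> i - x' $ \<pi> i))"
    using sum.reindex_bij_betw[OF b[folded n_def], of "\<lambda>i. a $ i * (u $ i - x' $ i)"] by simp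
  also have "\<dots> = (\<Sum>i<n. bb i * d i)"
    by (intro sum.cong refl) (auto simp: bb_def d_def unth T)
  finally have le0: "(\<Sum>i<n. bb i * d i) \<le> 0" using a2 uP2 by metis
  have D: "(\<Sum>l<j. d l) = sum_list (take j S) - sum_list (take j T)" if "j \<le> n" for j
    using that lS by (simp add: d_def sum_subtractf sum_take_nth T)
  have Dn: "(\<Sum>l<n. d l) = 0"
    using D[of n] maj lS decr_sort_props(3)[OF b, of x'] unfolding majorizes_def S_def T_def n_def by simp
  have Dj: "(\<Sum>l<j. d l) \<ge> 0" if "1 \<le> j" "j < n" for j
    using D[of j] maj that unfolding majorizes_def S_def T_def n_def by simp
  have "n > 0" unfolding n_def by simp
  then obtain k where k: "n = Suc k" by (cases n) auto
  have "\<exists>i<k. (\<Sum>l<Suc i. d l) > 0"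
  proof (rule ccontr)
    assume nex: "\<not> ?thesis"
    have z: "(\<Sum>l<Suc i. d l) = 0" if "i < n" for i
    proof (cases "i < k")
      case True
      then have "(\<Sum>l<Suc i. d l) \<ge> 0" using Dj[of "Suc i"] k by simp
      moreover have "\<not> (\<Sum>l<Suc i. d l) > 0" using nex True by blast
      ultimately show ?thesis by linarith
    next
      case False
      then have "i = k" using that k by simp
      then show ?thesis using Dn k by simp
    qed
    have "d i = 0" if "i < n" for i
    proof (cases i)
      case 0 then show ?thesis using z[of 0] that by simp
    next
      case (Suc m) then show ?thesis using z[of i] z[of m] that by simp
    qed
    then have "S = T" using lS by (intro nth_equalityI) (auto simp: T d_def)
    then show False using ne S_def T_def by simp
  qed
  then obtain i0 where i0: "i0 < k" "(\<Sum>l<Suc i0. d l) > 0" by blast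
  have "(\<Sum>i<k. (bb i - bb (Suc i)) * (\<Sum>l<Suc i. d l)) > 0"
  proof (rule sum_pos2[of _ i0])
    show "0 < (bb i0 - bb (Suc i0)) * (\<Sum>l<Suc i0. d l)"
      using a1 i0 k by (intro mult_pos_pos) (auto simp: bb_def n_def)
    show "0 \<le> (bb i - bb (Suc i)) * (\<Sum>l<Suc i. d l)" if "i \<in> {..<k}" for i
      using a1 that k Dj[of "Suc i"] by (intro mult_nonneg_nonneg) (auto simp: bb_def n_def less_imp_le)
  qed (use i0 in auto)
  then have "(\<Sum>i<n. bb i * d i) > 0" using abel_sum[of bb d k] Dn k by simp
  then show False using le0 by simp
qed


lemma hull_sub_conv: "convex T \<Longrightarrow> E \<subseteq> T \<Longrightarrow> convex hull E \<subseteq> T"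
  by (rule hull_minimal)

lemma dir2:
  fixes P :: "(real^'n) set" and x' :: "real^'n" and \<pi> :: "nat \<Rightarrow> 'n"
  assumes poly: "polytope P" and xP: "x' \<in> P"
    and b: "bij_betw \<pi> {..<CARD('n)} UNIV"
    and s: "\<forall>i. Suc i < CARD('n) \<longrightarrow> x' $ \<pi> i \<ge> x' $ \<pi> (Suc i)"
    and n2: "CARD('n) \<ge> 2"
    and nl: "\<not> (\<exists>u'\<in>P. majorizes u' x' \<and> decr_sort u' \<noteq> decr_sort x')"
  shows "\<exists>a :: real^'n. (\<forall>i. Suc i < CARD('n) \<longrightarrow> a $ \<pi> i > a $ \<pi> (Suc i)) \<and>
                 (\<forall>x\<in>P. (\<Sum>i\<in>UNIV. a $ i * (x $ i - x' $ i)) \<le> 0)"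
proof -
  define n where "n = CARD('n)"
  define Y where "Y = (\<lambda>x. x - x') ` P"
  have Yeq: "Y = (+) (- x') ` P" unfolding Y_def by (auto simp: algebra_simps)
  have polyY: "polytope Y" unfolding Yeq using poly polytope_translation_eq by blast
  define C where "C = conic hull Y"
  have clC: "closed C" unfolding C_def using polyY closed_conic_hull_strong by blast
  have cvC: "convex C" unfolding C_def using polyY polytope_imp_convex convex_conic_hull by blast
  define e where "e j = axis (\<pi> j) (1::real) - axis (\<pi> (Suc j)) 1" for j
  define E where "E = e ` {j. Suc j < n}"
  define B where "B = convex hull E"
  have finE: "finite E" unfolding E_def by (rule finite_imageI, rule finite_subset[of _ "{..<n}"]) auto
  have cpB: "compact B" unfolding B_def using finE compact_convex_hull finite_imp_compact by blast
  have cvB: "convex B" unfolding B_def by simp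
  have neB: "B \<noteq> {}" unfolding B_def E_def using n2 n_def by (auto intro!: exI[of _ 0])
  have inj: "inj_on \<pi> {..<n}" using b by (simp add: bij_betw_def n_def)
  have Wpi: "Wv \<pi> j $ \<pi> m = (if m < j then 1 else 0)" if "m < n" "j \<le> n" for j m
  proof -
    have "(\<pi> m \<in> \<pi> ` {..<j}) = (m < j)"
      using inj that by (auto simp: inj_on_def) (metis less_le_trans lessThan_iff)
    then show ?thesis by (simp add: Wv_def)
  qed
  have We: "Wv \<pi> j \<bullet> e m = (if m < j then 1 else 0) - (if Suc m < j then 1 else 0)"
    if "Suc m < n" "j \<le> n" for j m
    using that by (simp add: e_def inner_diff_right inner_axis Wpi)
  define V where "V = (\<Sum>j\<in>{1..<n}. Wv \<pi> j)"
  have Ve: "V \<bullet> e m = 1" if "Suc m < n" for m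
  proof -
    have "V \<bullet> e m = (\<Sum>j\<in>{1..<n}. Wv \<pi> j \<bullet> e m)" by (simp add: V_def inner_sum_left)
    also have "\<dots> = (\<Sum>j\<in>{1..<n}. if j = Suc m then 1 else 0)"
      using that by (intro sum.cong refl) (auto simp: We)
    also have "\<dots> = 1" using that by simp
    finally show ?thesis .
  qed
  have Bge: "B \<subseteq> {y. Wv \<pi> j \<bullet> y \<ge> 0}" if "j \<le> n" for j
    unfolding B_def by (rule hull_sub_conv[OF convex_halfspace_ge]) (auto simp: E_def We that)
  have Bn: "B \<subseteq> {y. Wv \<pi> n \<bullet> y = 0}"
    unfolding B_def by (rule hull_sub_conv[OF convex_hyperplane]) (auto simp: E_def We)
  have BV: "B \<subseteq> {y. V \<bullet> y = 1}"
    unfolding B_def by (rule hull_sub_conv[OF convex_hyperplane]) (auto simp: E_def Ve)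
  have Lx': "decr_sort x' = map (\<lambda>i. x' $ \<pi> i) [0..<n]" unfolding n_def by (rule sorted_x'[OF b s])
  have disj: "C \<inter> B = {}"
  proof (rule ccontr)
    assume "C \<inter> B \<noteq> {}"
    then obtain k where kC: "k \<in> C" and kB: "k \<in> B" by blast
    obtain c y where cy: "k = c *\<^sub>R y" "0 \<le> c" "y \<in> Y"
      using kC unfolding C_def conic_hull_explicit by blast
    obtain x where xP2: "x \<in> P" and yx: "y = x - x'" using cy(3) unfolding Y_def by blast
    have V1: "V \<bullet> k = 1" using kB BV by blast
    have "c \<noteq> 0" using V1 cy by auto
    then have cpos: "c > 0" using cy by simp
    have Wk: "Wv \<pi> j \<bullet> k = c * (Wv \<pi> j \<bullet> x - Wv \<pi> j \<bullet> x')" for j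
      by (simp add: cy yx inner_diff_right)
    have ge: "Wv \<pi> j \<bullet> x \<ge> Wv \<pi> j \<bullet> x'" if "j \<le> n" for j
    proof -
      have "Wv \<pi> j \<bullet> k \<ge> 0" using Bge[OF that] kB by blast
      then show ?thesis using cpos Wk[of j] by (simp add: zero_le_mult_iff)
    qed
    have eqn: "Wv \<pi> n \<bullet> x = Wv \<pi> n \<bullet> x'"
    proof -
      have "Wv \<pi> n \<bullet> k = 0" using Bn kB by blast
      then show ?thesis using cpos Wk[of n] by simp
    qed
    have "\<exists>j\<in>{1..<n}. Wv \<pi> j \<bullet> k > 0"
    proof (rule ccontr)
      assume "\<not> ?thesis"
      then have "(\<Sum>j\<in>{1..<n}. Wv \<pi> j \<bullet> k) \<le> 0" by (intro sum_nonpos) (auto simp: not_less)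
      then show False using V1 by (simp add: V_def inner_sum_left)
    qed
    then obtain j0 where j0: "1 \<le> j0" "j0 < n" "Wv \<pi> j0 \<bullet> k > 0" by auto
    have gt: "Wv \<pi> j0 \<bullet> x > Wv \<pi> j0 \<bullet> x'"
      using j0 cpos Wk[of j0] by (simp add: zero_less_mult_iff)
    define Lx where "Lx = map (\<lambda>i. x $ \<pi> i) [0..<n]"
    have mx: "mset Lx = mset (decr_sort x)" and sx: "sorted_wrt (\<ge>) (decr_sort x)"
      and sumx: "sum_list (decr_sort x) = sum_list Lx"
      using decr_sort_props[OF b, of x] by (auto simp: Lx_def n_def)
    have Wx: "Wv \<pi> j \<bullet> x = sum_list (take j Lx)" if "j \<le> n" for j
      using Wv_inner[OF b, of j x] that by (simp add: Lx_def n_def)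
    have Wx': "Wv \<pi> j \<bullet> x' = sum_list (take j (decr_sort x'))" if "j \<le> n" for j
      using Wv_inner[OF b, of j x'] that by (simp add: Lx' n_def)
    have top: "sum_list (take j Lx) \<le> sum_list (take j (decr_sort x))" if "j \<le> n" for j
      using top_sum[OF mx sx] that by (simp add: Lx_def)
    have maj: "majorizes x x'"
      unfolding majorizes_def
    proof (intro conjI allI impI)
      fix j assume "1 \<le> j \<and> j < CARD('n)"
      then have j: "j \<le> n" by (simp add: n_def)
      show "sum_list (take j (decr_sort x')) \<le> sum_list (take j (decr_sort x))"
        using top[OF j] Wx[OF j] Wx'[OF j] ge[OF j] by linarith
    next
      have "sum_list (decr_sort x) = Wv \<pi> n \<bullet> x" using sumx Wx[of n] by (simp add: Lx_def)
      also have "\<dots> = Wv \<pi> n \<bullet> x'" by (rule eqn)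
      also have "\<dots> = sum_list (decr_sort x')" using Wx'[of n] by (simp add: Lx')
      finally show "sum_list (decr_sort x) = sum_list (decr_sort x')" .
    qed
    have "decr_sort x \<noteq> decr_sort x'"
    proof
      assume eq: "decr_sort x = decr_sort x'"
      have "sum_list (take j0 (decr_sort x')) \<ge> Wv \<pi> j0 \<bullet> x"
        using top[of j0] Wx[of j0] j0 eq by simp
      then show False using gt Wx'[of j0] j0 by simp
    qed
    then show False using nl maj xP2 by blast
  qed
  obtain h \<beta> where hC: "\<forall>z\<in>C. h \<bullet> z < \<beta>" and hB: "\<forall>z\<in>B. h \<bullet> z > \<beta>"
    using separating_hyperplane_closed_compact[OF cvC clC cvB cpB neB disj] by blast
  have "Y \<noteq> {}" using xP unfolding Y_def by blast
  then have "0 \<in> C" unfolding C_def by simp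
  then have bpos: "\<beta> > 0" using hC by fastforce
  have hY: "h \<bullet> y \<le> 0" if "y \<in> Y" for y
  proof (rule ccontr)
    assume "\<not> ?thesis"
    then have hp: "h \<bullet> y > 0" by simp
    define t where "t = \<beta> / (h \<bullet> y)"
    have "t \<ge> 0" using bpos hp by (simp add: t_def)
    then have "t *\<^sub>R y \<in> C" unfolding C_def conic_hull_explicit using that by blast
    then have "h \<bullet> (t *\<^sub>R y) < \<beta>" using hC by blast
    then show False using hp by (simp add: t_def)
  qed
  show ?thesis
  proof (intro exI conjI allI impI ballI)
    fix i assume "Suc i < CARD('n)"
    then have "e i \<in> B" unfolding B_def E_def n_def by (auto intro: hull_inc)
    then have "h \<bullet> e i > 0" using hB bpos by fastforce
    then show "h $ \<pi> i > h $ \<pi> (Suc i)" by (simp add: e_def inner_diff_right inner_axis)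
  next
    fix x assume "x \<in> P"
    then have "h \<bullet> (x - x') \<le> 0" using hY unfolding Y_def by blast
    then show "(\<Sum>i\<in>UNIV. h $ i * (x $ i - x' $ i)) \<le> 0" by (simp add: inner_vec_def)
  qed
qed


theorem mainTheorem13:
  fixes P :: "(real^'n) set" and x' :: "real^'n" and \<pi> :: "nat \<Rightarrow> 'n"
  assumes "polytope P"
    and "perm_invariant P"
    and "x' \<in> P"
    and "bij_betw \<pi> {..<CARD('n)} (UNIV :: 'n set)"
    and "\<forall>i. Suc i < CARD('n) \<longrightarrow> x' $ \<pi> i \<ge> x' $ \<pi> (Suc i)"
  shows "(\<exists>u'\<in>P. majorizes u' x' \<and> decr_sort u' \<noteq> decr_sort x') \<longleftrightarrow>
         \<not> (\<exists>a :: real^'n. (\<forall>i. Suc i < CARD('n) \<longrightarrow> a $ \<pi> i > a $ \<pi> (Suc i)) \<and>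
                 (\<forall>x\<in>P. (\<Sum>i\<in>UNIV. a $ i * (x $ i - x' $ i)) \<le> 0))"
proof
  assume "\<exists>u'\<in>P. majorizes u' x' \<and> decr_sort u' \<noteq> decr_sort x'"
  then show "\<not> (\<exists>a :: real^'n. (\<forall>i. Suc i < CARD('n) \<longrightarrow> a $ \<pi> i > a $ \<pi> (Suc i)) \<and>
                 (\<forall>x\<in>P. (\<Sum>i\<in>UNIV. a $ i * (x $ i - x' $ i)) \<le> 0))"
    using dir1[OF assms(4,5,2)] by blast
next
  assume na: "\<not> (\<exists>a :: real^'n. (\<forall>i. Suc i < CARD('n) \<longrightarrow> a $ \<pi> i > a $ \<pi> (Suc i)) \<and>
                 (\<forall>x\<in>P. (\<Sum>i\<in>UNIV. a $ i * (x $ i - x' $ i)) \<le> 0))"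
  show "\<exists>u'\<in>P. majorizes u' x' \<and> decr_sort u' \<noteq> decr_sort x'"
  proof (rule ccontr)
    assume nl: "\<not> ?thesis"
    show False
    proof (cases "CARD('n) \<ge> 2")
      case True
      then show False using dir2[OF assms(1,3,4,5) True nl] na by blast
    next
      case False
      then have "\<forall>i. \<not> Suc i < CARD('n)" by auto
      then have "(\<forall>i. Suc i < CARD('n) \<longrightarrow> (0::real^'n) $ \<pi> i > 0 $ \<pi> (Suc i)) \<and>
                 (\<forall>x\<in>P. (\<Sum>i\<in>UNIV. (0::real^'n) $ i * (x $ i - x' $ i)) \<le> 0)" by simp
      then show False using na by blast
    qed
  qed
qed

end
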